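(* Let $G$ be a finite group and $p$ a prime. Let $\mathcal P(G,1)$ be the number of elements of $G$ of order divisible by $p$, and let $\mathbf 1_G$ denote the trivial $\mathbb{Z}_p[G]$-lattice. Then $$v_p(C_{\theta_G}(\mathbf 1_G))=-v_p(|G|)+\frac{1}{|G|}\sum_{g\in G}v_p(|g|)+\frac{\mathcal P(G,1)}{|G|(p-1)},$$ where $|g|$ denotes the order of $g$.
   Context: Artin relation: there are unique $\alpha_H\in\mathbb{Q}$, for $H$ running over representatives of conjugacy classes of cyclic subgroups of $G$, with $[\mathbf 1]=\sum_H\alpha_H[\mathbb{Q}[G/H]]$ in the rational representation ring tensored with $\mathbb{Q}$. The Artin relation is $\theta_G=[G]-\sum_H\alpha_H[H]$, a formal $\mathbb{Q}$-combination of symbols $[H]$ (standing for the $G$-sets $G/H$). For such a combination $\theta=\sum_K\beta_K[K]$ that is a rational Brauer relation, the regulator constant of the trivial module satisfies $$v_p(C_\theta(\mathbf 1_G))=-\sum_K\beta_K\,v_p(|K|).$$ This is the general regulator constant $\prod_i\det(\tfrac1{|H_i|}\langle\ ,\ \rangle|_{M^{H_i}})/\prod_j\det(\tfrac1{|H'_j|}\langle\ ,\ \rangle|_{M^{H'_j}})$ for an integral relation $\sum_i[H_i]-\sum_j[H'_j]$, evaluated at $M=\mathbb{Z}_p$ with form $\langle x,y\rangle=xy$, and extended linearly to rational relations. *)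

theory Defs
  imports "HOL-Algebra.Algebra" "HOL-Computational_Algebra.Primes"
begin

definition cyclic_subgroups :: "('a, 'b) monoid_scheme \<Rightarrow> 'a set set" where
  "cyclic_subgroups G = {H. \<exists>g\<in>carrier G. H = generate G {g}}"

definition conj_subgroups :: "('a, 'b) monoid_scheme \<Rightarrow> 'a set \<Rightarrow> 'a set \<Rightarrow> bool" where
  "conj_subgroups G H K = (\<exists>x\<in>carrier G. K = (\<lambda>h. x \<otimes>\<^bsub>G\<^esub> h \<otimes>\<^bsub>G\<^esub> inv\<^bsub>G\<^esub> x) ` H)"

definition cyc_classes :: "('a, 'b) monoid_scheme \<Rightarrow> 'a set set set" where
  "cyc_classes G = (\<lambda>H. {K \<in> cyclic_subgroups G. conj_subgroups G H K}) ` cyclic_subgroups G"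

definition cls_rep :: "'a set set \<Rightarrow> 'a set" where
  "cls_rep c = (SOME H. H \<in> c)"

(* character of the permutation representation Q[G/H]: number of cosets xH fixed by g *)
definition perm_char :: "('a, 'b) monoid_scheme \<Rightarrow> 'a set \<Rightarrow> 'a \<Rightarrow> nat" where
  "perm_char G H g = card {C. (\<exists>x\<in>carrier G. C = l_coset G x H) \<and> l_coset G g C = C}"

(* The coefficients alpha_H (indexed by conjugacy classes of cyclic subgroups) with
   [1] = sum_H alpha_H [Q[G/H]] in R_Q(G) (x) Q; equality in R_Q(G) (x) Q is equality of
   characters. *)
definition artin_alpha :: "('a, 'b) monoid_scheme \<Rightarrow> 'a set set \<Rightarrow> rat" where
  "artin_alpha G = (THE \<alpha>. (\<forall>c. c \<notin> cyc_classes G \<longrightarrow> \<alpha> c = 0) \<and>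
      (\<forall>g\<in>carrier G. (\<Sum>c\<in>cyc_classes G. \<alpha> c * of_nat (perm_char G (cls_rep c) g)) = 1))"

(* Artin relation theta_G = [G] - sum_H alpha_H [H], as Q-coefficients on subgroups *)
definition artin_relation :: "('a, 'b) monoid_scheme \<Rightarrow> 'a set \<Rightarrow> rat" where
  "artin_relation G K = (if K = carrier G then 1 else 0)
      - (\<Sum>c\<in>cyc_classes G. if cls_rep c = K then artin_alpha G c else 0)"

definition rat_vp :: "nat \<Rightarrow> rat \<Rightarrow> int" where
  "rat_vp p r = int (multiplicity p (nat \<bar>fst (quotient_of r)\<bar>))
               - int (multiplicity p (nat (snd (quotient_of r))))"

(* v_p of the regulator constant of the trivial Z_p[G]-lattice (form <x,y> = xy) w.r.t. a
   rational combination beta of subgroups: for an integral relation this is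
   sum_i v_p(det(1/|H_i| <,>|M^{H_i}|)) - sum_j v_p(det(1/|H'_j| <,>|M^{H'_j}|)), where
   M^H = Z_p and the determinant is 1/|H|; extended linearly to rational combinations. *)
definition vp_regconst_trivial :: "('a, 'b) monoid_scheme \<Rightarrow> nat \<Rightarrow> ('a set \<Rightarrow> rat) \<Rightarrow> rat" where
  "vp_regconst_trivial G p \<beta> =
     (\<Sum>K\<in>{K. subgroup K G}. \<beta> K * of_int (rat_vp p (1 / of_nat (card K))))"

end

theory Submission
  imports Defs
begin


definition cnj :: "('a, 'b) monoid_scheme \<Rightarrow> 'a \<Rightarrow> 'a set \<Rightarrow> 'a set" where
  "cnj G x H = (\<lambda>h. x \<otimes>\<^bsub>G\<^esub> h \<otimes>\<^bsub>G\<^esub> inv\<^bsub>G\<^esub> x) ` H"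

definition fcnt :: "('a, 'b) monoid_scheme \<Rightarrow> 'a set \<Rightarrow> 'a set \<Rightarrow> nat" where
  "fcnt G H K = card {x \<in> carrier G. K \<subseteq> cnj G x H}"

context group begin

lemma inv_cancel_l1 [simp]: "x \<in> carrier G \<Longrightarrow> y \<in> carrier G \<Longrightarrow> inv x \<otimes> (x \<otimes> y) = y"
  by (simp flip: m_assoc)

lemma inv_cancel_l2 [simp]: "x \<in> carrier G \<Longrightarrow> y \<in> carrier G \<Longrightarrow> x \<otimes> (inv x \<otimes> y) = y"
  by (simp flip: m_assoc)

lemma cnj_carrier: "x \<in> carrier G \<Longrightarrow> H \<subseteq> carrier G \<Longrightarrow> cnj G x H \<subseteq> carrier G"
  unfolding cnj_def by auto

lemma cnj_elem: "x \<in> carrier G \<Longrightarrow> y \<in> carrier G \<Longrightarrow> h \<in> carrier G \<Longrightarrow>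
   x \<otimes> (y \<otimes> h \<otimes> inv y) \<otimes> inv x = (x \<otimes> y) \<otimes> h \<otimes> inv (x \<otimes> y)"
  by (simp add: m_assoc inv_mult_group)

lemma cnj_cnj: "x \<in> carrier G \<Longrightarrow> y \<in> carrier G \<Longrightarrow> H \<subseteq> carrier G \<Longrightarrow>
   cnj G x (cnj G y H) = cnj G (x \<otimes> y) H"
  unfolding cnj_def image_image
  by (intro image_cong refl) (use cnj_elem in blast)

lemma cnj_one: "H \<subseteq> carrier G \<Longrightarrow> cnj G \<one> H = H"
  unfolding cnj_def by (auto simp: subsetD image_iff)

lemma cnj_inv: "y \<in> carrier G \<Longrightarrow> K \<subseteq> carrier G \<Longrightarrow> cnj G (inv y) (cnj G y K) = K"
  by (simp add: cnj_cnj cnj_one)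

lemma cnj_inv2: "y \<in> carrier G \<Longrightarrow> K \<subseteq> carrier G \<Longrightarrow> cnj G y (cnj G (inv y) K) = K"
  by (simp add: cnj_cnj cnj_one)

lemma cnj_mono: "A \<subseteq> B \<Longrightarrow> cnj G x A \<subseteq> cnj G x B"
  unfolding cnj_def by auto

lemma cnj_inj: "x \<in> carrier G \<Longrightarrow> inj_on (\<lambda>h. x \<otimes> h \<otimes> inv x) (carrier G)"
proof (rule inj_onI)
  fix a b assume x: "x \<in> carrier G" and a: "a \<in> carrier G" and b: "b \<in> carrier G"
    and e: "x \<otimes> a \<otimes> inv x = x \<otimes> b \<otimes> inv x"
  hence "x \<otimes> a = x \<otimes> b" by (meson inv_closed m_closed r_cancel)
  thus "a = b" using x a b by (meson l_cancel)
qed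

lemma card_cnj: "x \<in> carrier G \<Longrightarrow> H \<subseteq> carrier G \<Longrightarrow> card (cnj G x H) = card H"
  unfolding cnj_def by (rule card_image) (use cnj_inj inj_on_subset in blast)

lemma subgroup_cnj: assumes x: "x \<in> carrier G" and H: "subgroup H G"
  shows "subgroup (cnj G x H) G"
proof (rule subgroupI)
  have Hs: "H \<subseteq> carrier G" using H subgroup.subset by blast
  show "cnj G x H \<subseteq> carrier G" by (rule cnj_carrier[OF x Hs])
  show "cnj G x H \<noteq> {}" using subgroup.one_closed[OF H] unfolding cnj_def by auto
  fix a assume "a \<in> cnj G x H"
  then obtain h where h: "h \<in> H" "a = x \<otimes> h \<otimes> inv x" unfolding cnj_def by auto
  have hc: "h \<in> carrier G" using h Hs by auto
  have "inv a = x \<otimes> inv h \<otimes> inv x"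
    using h hc x by (simp add: inv_mult_group m_assoc)
  thus "inv a \<in> cnj G x H" unfolding cnj_def using subgroup.m_inv_closed[OF H h(1)] by auto
next
  have Hs: "H \<subseteq> carrier G" using H subgroup.subset by blast
  fix a b assume "a \<in> cnj G x H" "b \<in> cnj G x H"
  then obtain h k where h: "h \<in> H" "a = x \<otimes> h \<otimes> inv x" and k: "k \<in> H" "b = x \<otimes> k \<otimes> inv x"
    unfolding cnj_def by auto
  have hc: "h \<in> carrier G" "k \<in> carrier G" using h k Hs by auto
  have "a \<otimes> b = x \<otimes> (h \<otimes> k) \<otimes> inv x"
    using h k hc x by (simp add: m_assoc)
  thus "a \<otimes> b \<in> cnj G x H" unfolding cnj_def using subgroup.m_closed[OF H h(1) k(1)] by auto
qed

lemma conj_mem_iff: assumes x: "x \<in> carrier G" and g: "g \<in> carrier G" and H: "subgroup H G"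
  shows "inv x \<otimes> g \<otimes> x \<in> H \<longleftrightarrow> generate G {g} \<subseteq> cnj G x H"
proof
  assume a: "inv x \<otimes> g \<otimes> x \<in> H"
  have "g = x \<otimes> (inv x \<otimes> g \<otimes> x) \<otimes> inv x" using x g by (simp add: m_assoc)
  hence "g \<in> cnj G x H" unfolding cnj_def using a by blast
  thus "generate G {g} \<subseteq> cnj G x H"
    using generate_subgroup_incl subgroup_cnj[OF x H] by blast
next
  assume "generate G {g} \<subseteq> cnj G x H"
  hence "g \<in> cnj G x H" using generate.incl[of g "{g}" G] by blast
  then obtain h where h: "h \<in> H" "g = x \<otimes> h \<otimes> inv x" unfolding cnj_def by auto
  have hc: "h \<in> carrier G" using h H subgroup.subset by blast
  have "inv x \<otimes> g \<otimes> x = h" using h hc x by (simp add: m_assoc)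
  thus "inv x \<otimes> g \<otimes> x \<in> H" using h by simp
qed

end


locale fgrp = group G for G (structure) + assumes finG: "finite (carrier G)"

context fgrp begin

lemma coset_fixed_iff: assumes H: "subgroup H G" and x: "x \<in> carrier G" and g: "g \<in> carrier G"
  shows "g <# (x <# H) = x <# H \<longleftrightarrow> inv x \<otimes> g \<otimes> x \<in> H"
proof -
  have Hs: "H \<subseteq> carrier G" using H subgroup.subset by blast
  have e: "g <# (x <# H) = (g \<otimes> x) <# H" using lcos_m_assoc[OF Hs g x] .
  show ?thesis
  proof
    assume "g <# (x <# H) = x <# H"
    hence "g \<otimes> x \<in> x <# H" using e lcos_self[OF m_closed[OF g x] H] by simp
    hence "inv x \<otimes> (g \<otimes> x) \<in> H" using subgroup.lcos_module_imp[OF H is_group x] by blast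
    thus "inv x \<otimes> g \<otimes> x \<in> H" using x g by (simp add: m_assoc)
  next
    assume "inv x \<otimes> g \<otimes> x \<in> H"
    hence "inv x \<otimes> (g \<otimes> x) \<in> H" using x g by (simp add: m_assoc)
    hence "g \<otimes> x \<in> x <# H" using subgroup.lcos_module_rev[OF H is_group x m_closed[OF g x]] by blast
    hence "x <# H = (g \<otimes> x) <# H" using l_repr_independence[OF _ x H] by blast
    thus "g <# (x <# H) = x <# H" using e by simp
  qed
qed

lemma perm_char_card: assumes H: "subgroup H G" and g: "g \<in> carrier G"
  shows "perm_char G H g * card H = card {x \<in> carrier G. inv x \<otimes> g \<otimes> x \<in> H}"
proof -
  define FC where "FC = {C. (\<exists>x\<in>carrier G. C = x <# H) \<and> g <# C = C}"
  have Hs: "H \<subseteq> carrier G" using H subgroup.subset by blast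
  have FCl: "FC \<subseteq> lcosets H" unfolding FC_def LCOSETS_def by auto
  have finFC: "finite FC" using FCl lcosets_subset_PowG[OF H] finG
    by (meson finite_Pow_iff finite_subset)
  have U: "\<Union>FC = {x \<in> carrier G. inv x \<otimes> g \<otimes> x \<in> H}"
  proof
    show "\<Union>FC \<subseteq> {x \<in> carrier G. inv x \<otimes> g \<otimes> x \<in> H}"
    proof
      fix y assume "y \<in> \<Union>FC"
      then obtain x where x: "x \<in> carrier G" "y \<in> x <# H" "g <# (x <# H) = x <# H"
        unfolding FC_def by auto
      have yc: "y \<in> carrier G" using x l_coset_carrier H by blast
      have "x <# H = y <# H" using l_repr_independence[OF x(2) x(1) H] .
      hence "g <# (y <# H) = y <# H" using x(3) by simp
      thus "y \<in> {x \<in> carrier G. inv x \<otimes> g \<otimes> x \<in> H}" using coset_fixed_iff[OF H yc g] yc by simp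
    qed
  next
    show "{x \<in> carrier G. inv x \<otimes> g \<otimes> x \<in> H} \<subseteq> \<Union>FC"
    proof
      fix y assume "y \<in> {x \<in> carrier G. inv x \<otimes> g \<otimes> x \<in> H}"
      hence y: "y \<in> carrier G" "inv y \<otimes> g \<otimes> y \<in> H" by auto
      have "y <# H \<in> FC" unfolding FC_def using y coset_fixed_iff[OF H y(1) g] by auto
      thus "y \<in> \<Union>FC" using lcos_self[OF y(1) H] by blast
    qed
  qed
  have "card H * card FC = card (\<Union>FC)"
  proof (rule card_partition[OF finFC])
    show "finite (\<Union>FC)" using U finG by simp
    show "\<And>c. c \<in> FC \<Longrightarrow> card c = card H"
      using l_card_cosets_equal[OF _ Hs finG] FCl by (metis subsetD)
    show "\<And>c1 c2. c1 \<in> FC \<Longrightarrow> c2 \<in> FC \<Longrightarrow> c1 \<noteq> c2 \<Longrightarrow> c1 \<inter> c2 = {}"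
      using lcos_disjoint[OF H] FCl by blast
  qed
  moreover have "perm_char G H g = card FC" unfolding perm_char_def FC_def by simp
  ultimately show ?thesis using U by (simp add: mult.commute)
qed

lemma perm_char_fcnt: assumes H: "subgroup H G" and g: "g \<in> carrier G"
  shows "perm_char G H g * card H = fcnt G H (generate G {g})"
proof -
  have "{x \<in> carrier G. inv x \<otimes> g \<otimes> x \<in> H} = {x \<in> carrier G. generate G {g} \<subseteq> cnj G x H}"
    using conj_mem_iff[OF _ g H] by blast
  thus ?thesis using perm_char_card[OF H g] unfolding fcnt_def by simp
qed

lemma fcnt_cnj: assumes y: "y \<in> carrier G" and K: "K \<subseteq> carrier G" and H: "H \<subseteq> carrier G"
  shows "fcnt G H (cnj G y K) = fcnt G H K"
proof -
  have "{x \<in> carrier G. cnj G y K \<subseteq> cnj G x H} = (\<lambda>x. y \<otimes> x) ` {x \<in> carrier G. K \<subseteq> cnj G x H}"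
  proof
    show "{x \<in> carrier G. cnj G y K \<subseteq> cnj G x H} \<subseteq> (\<lambda>x. y \<otimes> x) ` {x \<in> carrier G. K \<subseteq> cnj G x H}"
    proof
      fix x' assume "x' \<in> {x \<in> carrier G. cnj G y K \<subseteq> cnj G x H}"
      hence x': "x' \<in> carrier G" "cnj G y K \<subseteq> cnj G x' H" by auto
      have "cnj G (inv y) (cnj G y K) \<subseteq> cnj G (inv y) (cnj G x' H)" using cnj_mono[OF x'(2)] .
      hence "K \<subseteq> cnj G (inv y \<otimes> x') H" using cnj_inv[OF y K] cnj_cnj[OF inv_closed[OF y] x'(1) H] by simp
      moreover have "x' = y \<otimes> (inv y \<otimes> x')" using y x' by simp
      ultimately show "x' \<in> (\<lambda>x. y \<otimes> x) ` {x \<in> carrier G. K \<subseteq> cnj G x H}"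
        using y x' by blast
    qed
  next
    show "(\<lambda>x. y \<otimes> x) ` {x \<in> carrier G. K \<subseteq> cnj G x H} \<subseteq> {x \<in> carrier G. cnj G y K \<subseteq> cnj G x H}"
    proof
      fix z assume "z \<in> (\<lambda>x. y \<otimes> x) ` {x \<in> carrier G. K \<subseteq> cnj G x H}"
      then obtain x where x: "x \<in> carrier G" "K \<subseteq> cnj G x H" "z = y \<otimes> x" by auto
      have "cnj G y K \<subseteq> cnj G y (cnj G x H)" using cnj_mono[OF x(2)] .
      thus "z \<in> {x \<in> carrier G. cnj G y K \<subseteq> cnj G x H}" using x y cnj_cnj[OF y x(1) H] by auto
    qed
  qed
  moreover have "inj_on (\<lambda>x. y \<otimes> x) {x \<in> carrier G. K \<subseteq> cnj G x H}"
    using inj_on_cmult[OF y] by (rule inj_on_subset) auto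
  ultimately show ?thesis unfolding fcnt_def by (simp add: card_image)
qed

lemma fcnt_self: assumes H: "H \<subseteq> carrier G" shows "fcnt G H H \<ge> 1"
proof -
  have "\<one> \<in> {x \<in> carrier G. H \<subseteq> cnj G x H}" using cnj_one[OF H] by simp
  moreover have "finite {x \<in> carrier G. H \<subseteq> cnj G x H}" using finG by simp
  ultimately show ?thesis unfolding fcnt_def
    by (metis One_nat_def Suc_leI card_gt_0_iff empty_iff)
qed

lemma fcnt_nz: assumes H: "H \<subseteq> carrier G" and K: "K \<subseteq> carrier G" and nz: "fcnt G H K \<noteq> 0"
  shows "card K \<le> card H \<and> (card K = card H \<longrightarrow> (\<exists>x\<in>carrier G. K = cnj G x H))"
proof -
  obtain x where x: "x \<in> carrier G" "K \<subseteq> cnj G x H" using nz unfolding fcnt_def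
    by (metis (no_types, lifting) card.empty empty_Collect_eq)
  have fin: "finite (cnj G x H)" using cnj_carrier[OF x(1) H] finG finite_subset by blast
  have c: "card (cnj G x H) = card H" using card_cnj[OF x(1) H] .
  have "card K \<le> card H" using card_mono[OF fin x(2)] c by simp
  moreover have "card K = card H \<longrightarrow> K = cnj G x H"
    using card_subset_eq[OF fin x(2)] c by simp
  ultimately show ?thesis using x(1) by blast
qed

lemma ord_conj: assumes x: "x \<in> carrier G" and h: "h \<in> carrier G"
  shows "ord (x \<otimes> h \<otimes> inv x) = ord h"
proof -
  have pw: "(x \<otimes> h \<otimes> inv x) [^] (n::nat) = x \<otimes> h [^] n \<otimes> inv x" for n
  proof (induction n)
    case 0 then show ?case using x by simp
  next
    case (Suc n)
    have "(x \<otimes> h \<otimes> inv x) [^] Suc n = (x \<otimes> h [^] n \<otimes> inv x) \<otimes> (x \<otimes> h \<otimes> inv x)"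
      using Suc by simp
    also have "\<dots> = x \<otimes> (h [^] n \<otimes> h) \<otimes> inv x" using x h by (simp add: m_assoc)
    also have "\<dots> = x \<otimes> h [^] Suc n \<otimes> inv x" by simp
    finally show ?case .
  qed
  have e: "(x \<otimes> h \<otimes> inv x) [^] (n::nat) = \<one> \<longleftrightarrow> h [^] n = \<one>" for n
  proof -
    have "x \<otimes> h [^] n \<otimes> inv x = x \<otimes> \<one> \<otimes> inv x \<longleftrightarrow> h [^] n = \<one>"
      using cnj_inj[OF x] h x unfolding inj_on_def by (metis nat_pow_closed one_closed)
    thus ?thesis using pw x by simp
  qed
  have c: "x \<otimes> h \<otimes> inv x \<in> carrier G" using x h by simp
  show ?thesis using e pow_eq_id[OF c] pow_eq_id[OF h] by (meson dvd_antisym dvd_refl)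
qed

end


definition cls :: "('a, 'b) monoid_scheme \<Rightarrow> 'a set \<Rightarrow> 'a set set" where
  "cls G H = {K \<in> cyclic_subgroups G. conj_subgroups G H K}"

definition chi :: "('a, 'b) monoid_scheme \<Rightarrow> 'a set set \<Rightarrow> 'a set \<Rightarrow> rat" where
  "chi G c K = of_nat (fcnt G (cls_rep c) K) / of_nat (card (cls_rep c))"

context fgrp begin

lemma conj_sub_iff: "conj_subgroups G H K \<longleftrightarrow> (\<exists>x\<in>carrier G. K = cnj G x H)"
  unfolding conj_subgroups_def cnj_def by simp

lemma cyc_classes_eq: "cyc_classes G = cls G ` cyclic_subgroups G"
  unfolding cyc_classes_def cls_def by simp

lemma cyc_sub: assumes "K \<in> cyclic_subgroups G"
  shows "subgroup K G" "K \<subseteq> carrier G" "\<exists>g\<in>carrier G. K = generate G {g}"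
  using assms unfolding cyclic_subgroups_def
  by (auto intro: generate_is_subgroup) (meson empty_subsetI generate_in_carrier insert_subset subsetD)

lemma card_cyc_le: "K \<in> cyclic_subgroups G \<Longrightarrow> card K \<le> card (carrier G)"
  using cyc_sub(2) finG card_mono by blast

lemma card_cyc_pos: "K \<in> cyclic_subgroups G \<Longrightarrow> card K > 0"
  using cyc_sub(1,2) finG subgroup.one_closed
  by (metis card_gt_0_iff empty_iff finite_subset)

lemma cls_mem: "K \<in> cyclic_subgroups G \<Longrightarrow> K \<in> cls G K"
  unfolding cls_def conj_sub_iff using cnj_one[OF cyc_sub(2)] by force

lemma cls_eq: assumes A: "A \<in> cyclic_subgroups G" and B: "B \<in> cyclic_subgroups G"
  and x: "x \<in> carrier G" and AB: "B = cnj G x A"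
  shows "cls G A = cls G B"
proof -
  have As: "A \<subseteq> carrier G" using cyc_sub(2)[OF A] .
  have "conj_subgroups G A K \<longleftrightarrow> conj_subgroups G B K" if K: "K \<in> cyclic_subgroups G" for K
  proof
    assume "conj_subgroups G A K"
    then obtain y where y: "y \<in> carrier G" "K = cnj G y A" using conj_sub_iff by auto
    have "K = cnj G (y \<otimes> inv x) B" using AB y cnj_cnj[OF y(1) inv_closed[OF x]] cnj_inv[OF x As]
      by (metis As cnj_carrier inv_closed x)
    thus "conj_subgroups G B K" using conj_sub_iff y x by blast
  next
    assume "conj_subgroups G B K"
    then obtain y where y: "y \<in> carrier G" "K = cnj G y B" using conj_sub_iff by auto
    have "K = cnj G (y \<otimes> x) A" using AB y cnj_cnj[OF y(1) x As] by simp
    thus "conj_subgroups G A K" using conj_sub_iff y x by blast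
  qed
  thus ?thesis unfolding cls_def by blast
qed

lemma rep_props: assumes c: "c \<in> cyc_classes G"
  shows "cls_rep c \<in> cyclic_subgroups G" "c = cls G (cls_rep c)"
proof -
  obtain H where H: "H \<in> cyclic_subgroups G" "c = cls G H" using c cyc_classes_eq by auto
  have "cls_rep c \<in> c" unfolding cls_rep_def using cls_mem[OF H(1)] H(2) by (metis someI)
  hence R: "cls_rep c \<in> cyclic_subgroups G" "conj_subgroups G H (cls_rep c)"
    using H unfolding cls_def by auto
  show "cls_rep c \<in> cyclic_subgroups G" using R(1) .
  obtain x where "x \<in> carrier G" "cls_rep c = cnj G x H" using R(2) conj_sub_iff by auto
  thus "c = cls G (cls_rep c)" using cls_eq[OF H(1) R(1)] H(2) by simp
qed

lemma rep_cls: assumes K: "K \<in> cyclic_subgroups G"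
  shows "\<exists>x\<in>carrier G. cls_rep (cls G K) = cnj G x K"
proof -
  have "cls G K \<in> cyc_classes G" using K cyc_classes_eq by auto
  hence "cls_rep (cls G K) \<in> cls G K" using rep_props by (metis K cls_mem cls_rep_def someI)
  thus ?thesis unfolding cls_def conj_sub_iff by auto
qed

lemma finite_cyc: "finite (cyclic_subgroups G)"
proof -
  have "cyclic_subgroups G \<subseteq> Pow (carrier G)" using cyc_sub(2) by blast
  thus ?thesis using finG finite_subset by blast
qed

lemma finite_classes: "finite (cyc_classes G)"
  using finite_cyc cyc_classes_eq by simp

lemma perm_char_chi: assumes c: "c \<in> cyc_classes G" and g: "g \<in> carrier G"
  shows "of_nat (perm_char G (cls_rep c) g) = chi G c (generate G {g})"
proof -
  have R: "cls_rep c \<in> cyclic_subgroups G" using rep_props[OF c] by simp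
  have "perm_char G (cls_rep c) g * card (cls_rep c) = fcnt G (cls_rep c) (generate G {g})"
    using perm_char_fcnt[OF cyc_sub(1)[OF R] g] .
  hence "(of_nat (perm_char G (cls_rep c) g) :: rat) * of_nat (card (cls_rep c)) = of_nat (fcnt G (cls_rep c) (generate G {g}))"
    by (metis of_nat_mult)
  thus ?thesis unfolding chi_def using card_cyc_pos[OF R] by (simp add: field_simps)
qed

lemma chi_nz: assumes c: "c \<in> cyc_classes G" and K: "K \<in> cyclic_subgroups G"
  and nz: "chi G c K \<noteq> 0"
  shows "card K \<le> card (cls_rep c) \<and> (card K = card (cls_rep c) \<longrightarrow> c = cls G K)"
proof -
  have R: "cls_rep c \<in> cyclic_subgroups G" using rep_props[OF c] by simp
  have "fcnt G (cls_rep c) K \<noteq> 0" using nz unfolding chi_def by auto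
  from fcnt_nz[OF cyc_sub(2)[OF R] cyc_sub(2)[OF K] this]
  have a: "card K \<le> card (cls_rep c)" and b: "card K = card (cls_rep c) \<longrightarrow> (\<exists>x\<in>carrier G. K = cnj G x (cls_rep c))"
    by auto
  have "card K = card (cls_rep c) \<longrightarrow> c = cls G K"
    using b cls_eq[OF R K] rep_props(2)[OF c] by auto
  thus ?thesis using a by blast
qed

lemma chi_self: assumes c: "c \<in> cyc_classes G" shows "chi G c (cls_rep c) \<noteq> 0"
proof -
  have R: "cls_rep c \<in> cyclic_subgroups G" using rep_props[OF c] by simp
  show ?thesis unfolding chi_def using fcnt_self[OF cyc_sub(2)[OF R]] card_cyc_pos[OF R] by auto
qed

lemma chi_inv: assumes c: "c \<in> cyc_classes G" and K: "K \<in> cyclic_subgroups G"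
  shows "chi G c K = chi G c (cls_rep (cls G K))"
proof -
  have R: "cls_rep c \<in> cyclic_subgroups G" using rep_props[OF c] by simp
  obtain x where x: "x \<in> carrier G" "cls_rep (cls G K) = cnj G x K" using rep_cls[OF K] by blast
  show ?thesis unfolding chi_def x(2) using fcnt_cnj[OF x(1) cyc_sub(2)[OF K] cyc_sub(2)[OF R]] by simp
qed

lemma card_rep_cls: assumes K: "K \<in> cyclic_subgroups G"
  shows "card (cls_rep (cls G K)) = card K"
  using rep_cls[OF K] card_cnj cyc_sub(2)[OF K] by metis

lemma cls_in: "K \<in> cyclic_subgroups G \<Longrightarrow> cls G K \<in> cyc_classes G"
  using cyc_classes_eq by auto

end


context fgrp begin

abbreviation "CL \<equiv> cyc_classes G"

lemma exist_step:
  assumes IH: "\<exists>\<alpha>. (\<forall>c. c \<notin> CL \<longrightarrow> \<alpha> c = 0) \<and> (\<forall>c\<in>CL. card (cls_rep c) < Suc n \<longrightarrow> \<alpha> c = 0)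
     \<and> (\<forall>K\<in>cyclic_subgroups G. Suc n \<le> card K \<longrightarrow> (\<Sum>c\<in>CL. \<alpha> c * chi G c K) = 1)"
  shows "\<exists>\<alpha>. (\<forall>c. c \<notin> CL \<longrightarrow> \<alpha> c = 0) \<and> (\<forall>c\<in>CL. card (cls_rep c) < n \<longrightarrow> \<alpha> c = 0)
     \<and> (\<forall>K\<in>cyclic_subgroups G. n \<le> card K \<longrightarrow> (\<Sum>c\<in>CL. \<alpha> c * chi G c K) = 1)"
proof -
  obtain \<alpha> where a1: "\<forall>c. c \<notin> CL \<longrightarrow> \<alpha> c = 0" and a2: "\<forall>c\<in>CL. card (cls_rep c) < Suc n \<longrightarrow> \<alpha> c = 0"
    and a3: "\<forall>K\<in>cyclic_subgroups G. Suc n \<le> card K \<longrightarrow> (\<Sum>c\<in>CL. \<alpha> c * chi G c K) = 1"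
    using IH by blast
  define \<alpha>' where "\<alpha>' c = (if c \<in> CL \<and> card (cls_rep c) = n
      then (1 - (\<Sum>c'\<in>CL. \<alpha> c' * chi G c' (cls_rep c))) / chi G c (cls_rep c) else \<alpha> c)" for c
  have b1: "\<forall>c. c \<notin> CL \<longrightarrow> \<alpha>' c = 0" using a1 unfolding \<alpha>'_def by auto
  have b2: "\<forall>c\<in>CL. card (cls_rep c) < n \<longrightarrow> \<alpha>' c = 0" using a2 unfolding \<alpha>'_def by auto
  have b3: "(\<Sum>c\<in>CL. \<alpha>' c * chi G c K) = 1" if K: "K \<in> cyclic_subgroups G" "n \<le> card K" for K
  proof -
    have split: "(\<Sum>c\<in>CL. \<alpha>' c * chi G c K) = (\<Sum>c\<in>CL. \<alpha> c * chi G c K)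
        + (\<Sum>c\<in>CL. if card (cls_rep c) = n then \<alpha>' c * chi G c K else 0)"
      unfolding sum.distrib[symmetric]
      by (rule sum.cong) (use a2 in \<open>auto simp: \<alpha>'_def\<close>)
    show ?thesis
    proof (cases "n < card K")
      case True
      have "(\<Sum>c\<in>CL. if card (cls_rep c) = n then \<alpha>' c * chi G c K else 0) = 0"
      proof (rule sum.neutral, intro ballI)
        fix c assume c: "c \<in> CL"
        show "(if card (cls_rep c) = n then \<alpha>' c * chi G c K else 0) = 0"
          using chi_nz[OF c K(1)] True by auto
      qed
      thus ?thesis using split a3 K True by simp
    next
      case False
      hence cK: "card K = n" using K by simp
      define c0 where "c0 = cls G K"
      have c0: "c0 \<in> CL" using cls_in[OF K(1)] c0_def by simp
      have cr: "card (cls_rep c0) = n" using card_rep_cls[OF K(1)] cK c0_def by simp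
      have "(\<Sum>c\<in>CL. if card (cls_rep c) = n then \<alpha>' c * chi G c K else 0)
          = (\<Sum>c\<in>CL. if c = c0 then \<alpha>' c0 * chi G c0 K else 0)"
      proof (rule sum.cong[OF refl])
        fix c assume c: "c \<in> CL"
        show "(if card (cls_rep c) = n then \<alpha>' c * chi G c K else 0) = (if c = c0 then \<alpha>' c0 * chi G c0 K else 0)"
          using chi_nz[OF c K(1)] cK cr c0_def by auto
      qed
      also have "\<dots> = \<alpha>' c0 * chi G c0 K" using c0 finite_classes by simp
      finally have s2: "(\<Sum>c\<in>CL. if card (cls_rep c) = n then \<alpha>' c * chi G c K else 0) = \<alpha>' c0 * chi G c0 K" .
      have inv: "chi G c K = chi G c (cls_rep c0)" if "c \<in> CL" for c
        using chi_inv[OF that K(1)] c0_def by simp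
      have S: "(\<Sum>c\<in>CL. \<alpha> c * chi G c K) = (\<Sum>c'\<in>CL. \<alpha> c' * chi G c' (cls_rep c0))"
        using inv by (intro sum.cong) auto
      have nz: "chi G c0 (cls_rep c0) \<noteq> 0" using chi_self[OF c0] .
      have "\<alpha>' c0 = (1 - (\<Sum>c'\<in>CL. \<alpha> c' * chi G c' (cls_rep c0))) / chi G c0 (cls_rep c0)"
        unfolding \<alpha>'_def using c0 cr by simp
      hence "\<alpha>' c0 * chi G c0 (cls_rep c0) = 1 - (\<Sum>c'\<in>CL. \<alpha> c' * chi G c' (cls_rep c0))"
        using nz by simp
      thus ?thesis unfolding split s2 S inv[OF c0] by simp
    qed
  qed
  show ?thesis using b1 b2 b3 by blast
qed

lemma exist_all: "\<exists>\<alpha>. (\<forall>c. c \<notin> CL \<longrightarrow> \<alpha> c = 0)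
     \<and> (\<forall>K\<in>cyclic_subgroups G. (\<Sum>c\<in>CL. \<alpha> c * chi G c K) = 1)"
proof -
  have "\<exists>\<alpha>. (\<forall>c. c \<notin> CL \<longrightarrow> \<alpha> c = 0) \<and> (\<forall>c\<in>CL. card (cls_rep c) < n \<longrightarrow> \<alpha> c = 0)
     \<and> (\<forall>K\<in>cyclic_subgroups G. n \<le> card K \<longrightarrow> (\<Sum>c\<in>CL. \<alpha> c * chi G c K) = 1)"
    if "n \<le> Suc (card (carrier G))" for n
    using that
  proof (induction n rule: inc_induct)
    case base
    show ?case
    proof (rule exI[of _ "\<lambda>_. 0"], intro conjI)
      show "\<forall>K\<in>cyclic_subgroups G. Suc (card (carrier G)) \<le> card K \<longrightarrow> (\<Sum>c\<in>CL. 0 * chi G c K) = 1"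
      proof (intro ballI impI)
        fix K assume "K \<in> cyclic_subgroups G" "Suc (card (carrier G)) \<le> card K"
        thus "(\<Sum>c\<in>CL. 0 * chi G c K) = 1" using card_cyc_le by fastforce
      qed
    qed auto
  next
    case (step n)
    show ?case using exist_step[OF step.IH] .
  qed
  from this[of 0] show ?thesis by auto
qed

lemma uniq: assumes a1: "\<forall>c. c \<notin> CL \<longrightarrow> \<alpha> c = 0" and a2: "\<forall>K\<in>cyclic_subgroups G. (\<Sum>c\<in>CL. \<alpha> c * chi G c K) = 1"
  and b1: "\<forall>c. c \<notin> CL \<longrightarrow> \<beta> c = 0" and b2: "\<forall>K\<in>cyclic_subgroups G. (\<Sum>c\<in>CL. \<beta> c * chi G c K) = 1"
  shows "\<alpha> = \<beta>"
proof (rule ccontr)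
  assume ne: "\<alpha> \<noteq> \<beta>"
  define \<gamma> where "\<gamma> c = \<alpha> c - \<beta> c" for c
  have g0: "(\<Sum>c\<in>CL. \<gamma> c * chi G c K) = 0" if "K \<in> cyclic_subgroups G" for K
    using a2 b2 that unfolding \<gamma>_def by (simp add: left_diff_distrib sum_subtractf)
  obtain c1 where "\<alpha> c1 \<noteq> \<beta> c1" using ne by auto
  moreover have "c1 \<in> CL"
  proof (rule ccontr)
    assume "c1 \<notin> CL" thus False using a1 b1 \<open>\<alpha> c1 \<noteq> \<beta> c1\<close> by simp
  qed
  ultimately have c1: "c1 \<in> CL \<and> \<gamma> c1 \<noteq> 0" unfolding \<gamma>_def by simp
  have bnd: "\<forall>y. (y \<in> CL \<and> \<gamma> y \<noteq> 0) \<longrightarrow> card (cls_rep y) < Suc (card (carrier G))"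
    using card_cyc_le rep_props(1) by (simp add: le_imp_less_Suc)
  obtain c0 where c0: "c0 \<in> CL" "\<gamma> c0 \<noteq> 0"
    and mx: "\<forall>y. (y \<in> CL \<and> \<gamma> y \<noteq> 0) \<longrightarrow> card (cls_rep y) \<le> card (cls_rep c0)"
    using Lattices_Big.ex_has_greatest_nat[of "\<lambda>y. y \<in> CL \<and> \<gamma> y \<noteq> 0" c1 "\<lambda>y. card (cls_rep y)", OF c1 bnd]
    by blast
  have R0: "cls_rep c0 \<in> cyclic_subgroups G" using rep_props[OF c0(1)] by simp
  have "(\<Sum>c\<in>CL. \<gamma> c * chi G c (cls_rep c0)) = (\<Sum>c\<in>CL. if c = c0 then \<gamma> c0 * chi G c0 (cls_rep c0) else 0)"
  proof (rule sum.cong[OF refl])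
    fix c assume c: "c \<in> CL"
    show "\<gamma> c * chi G c (cls_rep c0) = (if c = c0 then \<gamma> c0 * chi G c0 (cls_rep c0) else 0)"
    proof (cases "c = c0")
      case False
      show ?thesis
      proof (cases "\<gamma> c = 0 \<or> chi G c (cls_rep c0) = 0")
        case True thus ?thesis using False by auto
      next
        case F2: False
        have "card (cls_rep c0) \<le> card (cls_rep c) \<and> (card (cls_rep c0) = card (cls_rep c) \<longrightarrow> c = cls G (cls_rep c0))"
          using chi_nz[OF c R0] F2 by blast
        moreover have "card (cls_rep c) \<le> card (cls_rep c0)" using mx c F2 by blast
        ultimately have "c = c0" using rep_props(2)[OF c0(1)] by simp
        thus ?thesis using False by simp
      qed
    qed simp
  qed
  also have "\<dots> = \<gamma> c0 * chi G c0 (cls_rep c0)" using c0 finite_classes by simp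
  finally have "\<gamma> c0 * chi G c0 (cls_rep c0) = 0" using g0[OF R0] by simp
  thus False using c0 chi_self[OF c0(1)] by simp
qed

lemma artin_alpha_props:
  shows "\<forall>c. c \<notin> CL \<longrightarrow> artin_alpha G c = 0"
    and "\<forall>g\<in>carrier G. (\<Sum>c\<in>CL. artin_alpha G c * of_nat (perm_char G (cls_rep c) g)) = 1"
proof -
  define P where "P \<alpha> = ((\<forall>c. c \<notin> CL \<longrightarrow> \<alpha> c = 0) \<and>
      (\<forall>g\<in>carrier G. (\<Sum>c\<in>CL. \<alpha> c * of_nat (perm_char G (cls_rep c) g)) = 1))" for \<alpha> :: "'a set set \<Rightarrow> rat"
  have conv: "P \<alpha> \<longleftrightarrow> (\<forall>c. c \<notin> CL \<longrightarrow> \<alpha> c = 0) \<and> (\<forall>K\<in>cyclic_subgroups G. (\<Sum>c\<in>CL. \<alpha> c * chi G c K) = 1)" for \<alpha>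
  proof -
    have "(\<Sum>c\<in>CL. \<alpha> c * of_nat (perm_char G (cls_rep c) g)) = (\<Sum>c\<in>CL. \<alpha> c * chi G c (generate G {g}))"
      if "g \<in> carrier G" for g
      using perm_char_chi[OF _ that] by (intro sum.cong) auto
    moreover have "generate G {g} \<in> cyclic_subgroups G" if "g \<in> carrier G" for g
      unfolding cyclic_subgroups_def using that by blast
    ultimately show ?thesis unfolding P_def cyclic_subgroups_def by auto
  qed
  obtain \<alpha>0 where a0: "(\<forall>c. c \<notin> CL \<longrightarrow> \<alpha>0 c = 0)
     \<and> (\<forall>K\<in>cyclic_subgroups G. (\<Sum>c\<in>CL. \<alpha>0 c * chi G c K) = 1)" using exist_all by blast
  have ex1: "\<exists>!\<alpha>. P \<alpha>"
  proof (rule ex1I[of _ \<alpha>0])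
    show "P \<alpha>0" using conv a0 by blast
    fix \<beta> assume "P \<beta>"
    hence "(\<forall>c. c \<notin> CL \<longrightarrow> \<beta> c = 0)
     \<and> (\<forall>K\<in>cyclic_subgroups G. (\<Sum>c\<in>CL. \<beta> c * chi G c K) = 1)" using conv by blast
    thus "\<beta> = \<alpha>0" using uniq a0 by blast
  qed
  have "P (artin_alpha G)" unfolding artin_alpha_def P_def[symmetric] using theI'[OF ex1] .
  thus "\<forall>c. c \<notin> CL \<longrightarrow> artin_alpha G c = 0"
    and "\<forall>g\<in>carrier G. (\<Sum>c\<in>CL. artin_alpha G c * of_nat (perm_char G (cls_rep c) g)) = 1"
    unfolding P_def by auto
qed

end


definition uu :: "nat \<Rightarrow> nat \<Rightarrow> rat" where
  "uu p d = of_nat (multiplicity p d) + (if p dvd d then 1 / (of_nat p - 1) else 0)"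

lemma card_multiples: assumes p: "p > 0" shows "card {k. k < p * m \<and> p dvd k} = m"
proof -
  have "{k. k < p * m \<and> p dvd k} = (\<lambda>j. p * j) ` {..<m}"
  proof
    show "{k. k < p * m \<and> p dvd k} \<subseteq> (\<lambda>j. p * j) ` {..<m}"
      using p by (auto elim!: dvdE)
    show "(\<lambda>j. p * j) ` {..<m} \<subseteq> {k. k < p * m \<and> p dvd k}"
      using p by auto
  qed
  moreover have "inj_on (\<lambda>j. p * j) {..<m}" using p by (auto simp: inj_on_def)
  ultimately show ?thesis by (simp add: card_image)
qed

lemma nt_sum: assumes p: "Factorial_Ring.prime (p::nat)"
  shows "n > 0 \<Longrightarrow> (\<Sum>k<n. uu p (n div gcd n k)) = of_nat (n * multiplicity p n)"
proof (induction n rule: less_induct)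
  case (less n)
  have p1: "p > 1" using p prime_gt_1_nat by blast
  show ?case
  proof (cases "p dvd n")
    case False
    have "uu p (n div gcd n k) = 0" for k
    proof -
      have "n div gcd n k dvd n" using less.prems by (simp add: div_dvd_iff_mult)
      hence "\<not> p dvd n div gcd n k" using False dvd_trans by blast
      thus ?thesis unfolding uu_def by (simp add: not_dvd_imp_multiplicity_0)
    qed
    moreover have "multiplicity p n = 0" using False by (simp add: not_dvd_imp_multiplicity_0)
    ultimately show ?thesis by simp
  next
    case True
    then obtain m where nm: "n = p * m" by (elim dvdE)
    have m0: "m > 0" using nm less.prems by simp
    have mlt: "m < n" using nm p1 m0 by simp
    have mult_n: "multiplicity p n = Suc (multiplicity p m)"
      using nm m0 p multiplicity_times_same[of m p] p1 by (simp add: prime_def)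
    have fin: "finite {..<n}" by simp
    have part1: "(\<Sum>k\<in>{k. k < n \<and> p dvd k}. uu p (n div gcd n k)) = of_nat (m * multiplicity p m)"
    proof -
      have "{k. k < n \<and> p dvd k} = (\<lambda>j. p * j) ` {..<m}"
        using p1 nm by (auto elim!: dvdE)
      moreover have "inj_on (\<lambda>j. p * j) {..<m}" using p1 by (auto simp: inj_on_def)
      ultimately have "(\<Sum>k\<in>{k. k < n \<and> p dvd k}. uu p (n div gcd n k)) = (\<Sum>j<m. uu p (n div gcd n (p * j)))"
        by (simp add: sum.reindex)
      also have "\<dots> = (\<Sum>j<m. uu p (m div gcd m j))"
      proof (rule sum.cong[OF refl])
        fix j
        have "gcd n (p * j) = p * gcd m j" using nm by (simp add: gcd_mult_distrib_nat)
        hence "n div gcd n (p * j) = m div gcd m j" using nm p1 by simp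
        thus "uu p (n div gcd n (p * j)) = uu p (m div gcd m j)" by simp
      qed
      also have "\<dots> = of_nat (m * multiplicity p m)" using less.IH[OF mlt m0] .
      finally show ?thesis .
    qed
    have part2: "(\<Sum>k\<in>{k. k < n \<and> \<not> p dvd k}. uu p (n div gcd n k))
        = of_nat (n - m) * (of_nat (Suc (multiplicity p m)) + 1 / (of_nat p - 1))"
    proof -
      have "uu p (n div gcd n k) = of_nat (Suc (multiplicity p m)) + 1 / (of_nat p - 1)"
        if k: "k < n" "\<not> p dvd k" for k
      proof -
        have g0: "gcd n k \<noteq> 0" using less.prems by simp
        have d0: "n div gcd n k \<noteq> 0" using less.prems by (simp add: div_eq_0_iff not_less gcd_le1_nat)
        have gp: "\<not> p dvd gcd n k" using k(2) by (meson dvd_trans gcd_dvd2)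
        have "n = gcd n k * (n div gcd n k)" by simp
        hence "multiplicity p n = multiplicity p (gcd n k) + multiplicity p (n div gcd n k)"
          using prime_elem_multiplicity_mult_distrib[of p "gcd n k" "n div gcd n k"] p g0 d0
          by (metis prime_imp_prime_elem)
        hence md: "multiplicity p (n div gcd n k) = Suc (multiplicity p m)"
          using gp mult_n by (simp add: not_dvd_imp_multiplicity_0)
        hence "p dvd n div gcd n k" using d0
          by (metis multiplicity_eq_zero_iff nat.simps(3) p prime_imp_prime_elem not_prime_unit prime_nat_iff)
        thus ?thesis unfolding uu_def md by simp
      qed
      hence "(\<Sum>k\<in>{k. k < n \<and> \<not> p dvd k}. uu p (n div gcd n k))
          = (\<Sum>k\<in>{k. k < n \<and> \<not> p dvd k}. of_nat (Suc (multiplicity p m)) + 1 / (of_nat p - 1))"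
        by (intro sum.cong) auto
      also have "\<dots> = of_nat (card {k. k < n \<and> \<not> p dvd k}) * (of_nat (Suc (multiplicity p m)) + 1 / (of_nat p - 1))"
        by simp
      also have "card {k. k < n \<and> \<not> p dvd k} = n - m"
      proof -
        have "{k. k < n \<and> \<not> p dvd k} = {..<n} - {k. k < p * m \<and> p dvd k}" using nm by auto
        moreover have "{k. k < p * m \<and> p dvd k} \<subseteq> {..<n}" using nm by auto
        ultimately show ?thesis using card_multiples[of p m] p1
          by (simp add: card_Diff_subset)
      qed
      finally show ?thesis .
    qed
    have "{..<n} = {k. k < n \<and> p dvd k} \<union> {k. k < n \<and> \<not> p dvd k}" by auto
    hence "(\<Sum>k<n. uu p (n div gcd n k)) = (\<Sum>k\<in>{k. k < n \<and> p dvd k}. uu p (n div gcd n k))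
        + (\<Sum>k\<in>{k. k < n \<and> \<not> p dvd k}. uu p (n div gcd n k))"
      by (simp add: sum.union_disjoint[symmetric] disjoint_iff)
    also have "\<dots> = of_nat (m * multiplicity p m) + of_nat (n - m) * (of_nat (Suc (multiplicity p m)) + 1 / (of_nat p - 1))"
      using part1 part2 by simp
    also have "\<dots> = of_nat (n * multiplicity p n)"
    proof -
      have pne: "(of_nat p :: rat) - 1 \<noteq> 0" using p1 by simp
      have nm': "of_nat (n - m) = (of_nat p - 1) * (of_nat m :: rat)"
        using nm p1 by (simp add: of_nat_diff algebra_simps)
      show ?thesis unfolding mult_n nm' using pne nm
        by (simp add: field_simps)
    qed
    finally show ?thesis .
  qed
qed



lemma rat_vp_inv: assumes "n > 0" shows "rat_vp p (1 / of_nat n) = - int (multiplicity p n)"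
proof -
  have "(1::rat) / of_nat n = Fract 1 (int n)" by (simp add: Fract_of_int_quotient)
  hence "quotient_of (1 / of_nat n) = (1, int n)"
    using assms by (simp add: quotient_of_Fract normalize_def)
  thus ?thesis unfolding rat_vp_def by simp
qed

context fgrp begin

lemma cyc_sum: assumes p: "Factorial_Ring.prime p" and g0: "g0 \<in> carrier G"
  shows "(\<Sum>h\<in>generate G {g0}. uu p (ord h)) = of_nat (ord g0 * multiplicity p (ord g0))"
proof -
  define n where "n = ord g0"
  have n1: "n \<ge> 1" using ord_ge_1[OF finG g0] n_def by simp
  have gen: "generate G {g0} = (\<lambda>k. g0 [^] k) ` {0..n-1}"
    using generate_pow_nat[OF g0] ord_elems_inf_carrier[OF g0] n1 n_def by auto
  have inj: "inj_on (\<lambda>k. g0 [^] k) {0..n-1}" using ord_inj[OF g0] n_def by simp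
  have "(\<Sum>h\<in>generate G {g0}. uu p (ord h)) = (\<Sum>k\<in>{0..n-1}. uu p (ord (g0 [^] k)))"
    unfolding gen using sum.reindex[OF inj, of "\<lambda>h. uu p (ord h)"] by (simp add: o_def)
  also have "\<dots> = (\<Sum>k<n. uu p (n div gcd n k))"
  proof -
    have "{0..n-1} = {..<n}" using n1 by auto
    moreover have "ord (g0 [^] k) = n div gcd n k" for k :: nat
      using ord_pow_gen[OF g0, of k] n_def n1 by auto
    ultimately show ?thesis by simp
  qed
  also have "\<dots> = of_nat (n * multiplicity p n)" using nt_sum[OF p] n1 by simp
  finally show ?thesis using n_def by simp
qed

lemma dsum: assumes H: "subgroup H G"
  and f: "\<And>x h. x \<in> carrier G \<Longrightarrow> h \<in> carrier G \<Longrightarrow> f (x \<otimes> h \<otimes> inv x) = f h"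
  shows "(\<Sum>g\<in>carrier G. f g * of_nat (card {x\<in>carrier G. inv x \<otimes> g \<otimes> x \<in> H}))
       = of_nat (card (carrier G)) * (\<Sum>h\<in>H. f h :: rat)"
proof -
  have Hs: "H \<subseteq> carrier G" using H subgroup.subset by blast
  have "(\<Sum>g\<in>carrier G. f g * of_nat (card {x\<in>carrier G. inv x \<otimes> g \<otimes> x \<in> H}))
      = (\<Sum>g\<in>carrier G. \<Sum>x\<in>carrier G. if inv x \<otimes> g \<otimes> x \<in> H then f g else 0)"
  proof (rule sum.cong[OF refl])
    fix g
    have "(\<Sum>x\<in>carrier G. if inv x \<otimes> g \<otimes> x \<in> H then f g else 0) = (\<Sum>x\<in>{x\<in>carrier G. inv x \<otimes> g \<otimes> x \<in> H}. f g)"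
      by (rule sum.inter_filter[OF finG, symmetric])
    also have "\<dots> = of_nat (card {x\<in>carrier G. inv x \<otimes> g \<otimes> x \<in> H}) * f g" by simp
    finally show "f g * of_nat (card {x\<in>carrier G. inv x \<otimes> g \<otimes> x \<in> H}) = (\<Sum>x\<in>carrier G. if inv x \<otimes> g \<otimes> x \<in> H then f g else 0)"
      by (simp add: mult.commute)
  qed
  also have "\<dots> = (\<Sum>x\<in>carrier G. \<Sum>g\<in>carrier G. if inv x \<otimes> g \<otimes> x \<in> H then f g else 0)"
    by (rule sum.swap)
  also have "\<dots> = (\<Sum>x\<in>carrier G. \<Sum>h\<in>H. f h)"
  proof (rule sum.cong[OF refl])
    fix x assume x: "x \<in> carrier G"
    have "(\<Sum>g\<in>carrier G. if inv x \<otimes> g \<otimes> x \<in> H then f g else 0) = (\<Sum>g\<in>{g\<in>carrier G. inv x \<otimes> g \<otimes> x \<in> H}. f g)"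
      by (rule sum.inter_filter[OF finG, symmetric])
    also have "{g\<in>carrier G. inv x \<otimes> g \<otimes> x \<in> H} = (\<lambda>h. x \<otimes> h \<otimes> inv x) ` H"
    proof
      show "{g\<in>carrier G. inv x \<otimes> g \<otimes> x \<in> H} \<subseteq> (\<lambda>h. x \<otimes> h \<otimes> inv x) ` H"
      proof
        fix g assume "g \<in> {g\<in>carrier G. inv x \<otimes> g \<otimes> x \<in> H}"
        hence g: "g \<in> carrier G" "inv x \<otimes> g \<otimes> x \<in> H" by auto
        have "g = x \<otimes> (inv x \<otimes> g \<otimes> x) \<otimes> inv x" using x g by (simp add: m_assoc)
        thus "g \<in> (\<lambda>h. x \<otimes> h \<otimes> inv x) ` H" using g by blast
      qed
      show "(\<lambda>h. x \<otimes> h \<otimes> inv x) ` H \<subseteq> {g\<in>carrier G. inv x \<otimes> g \<otimes> x \<in> H}"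
      proof
        fix g assume "g \<in> (\<lambda>h. x \<otimes> h \<otimes> inv x) ` H"
        then obtain h where h: "h \<in> H" "g = x \<otimes> h \<otimes> inv x" by auto
        have hc: "h \<in> carrier G" using h Hs by auto
        have "inv x \<otimes> g \<otimes> x = h" using h hc x by (simp add: m_assoc)
        thus "g \<in> {g\<in>carrier G. inv x \<otimes> g \<otimes> x \<in> H}" using h hc x by auto
      qed
    qed
    also have "(\<Sum>g\<in>(\<lambda>h. x \<otimes> h \<otimes> inv x) ` H. f g) = (\<Sum>h\<in>H. f (x \<otimes> h \<otimes> inv x))"
      using cnj_inj[OF x] Hs by (simp add: sum.reindex inj_on_subset)
    also have "\<dots> = (\<Sum>h\<in>H. f h)" using f x Hs by (intro sum.cong) auto
    finally show "(\<Sum>g\<in>carrier G. if inv x \<otimes> g \<otimes> x \<in> H then f g else 0) = (\<Sum>h\<in>H. f h)" .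
  qed
  also have "\<dots> = of_nat (card (carrier G)) * (\<Sum>h\<in>H. f h)" by simp
  finally show ?thesis .
qed

lemma class_sum: assumes p: "Factorial_Ring.prime p" and c: "c \<in> CL"
  shows "(\<Sum>g\<in>carrier G. uu p (ord g) * of_nat (perm_char G (cls_rep c) g))
      = of_nat (card (carrier G)) * of_nat (multiplicity p (card (cls_rep c)))"
proof -
  define H where "H = cls_rep c"
  have R: "H \<in> cyclic_subgroups G" using rep_props[OF c] H_def by simp
  obtain g0 where g0: "g0 \<in> carrier G" "H = generate G {g0}" using cyc_sub(3)[OF R] by blast
  have HS: "subgroup H G" using cyc_sub(1)[OF R] .
  have cH: "card H = ord g0" using generate_pow_card[OF g0(1)] g0(2) by simp
  have cpos: "card H > 0" using card_cyc_pos[OF R] .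
  have e: "uu p (ord g) * of_nat (perm_char G H g) = uu p (ord g) * of_nat (card {x\<in>carrier G. inv x \<otimes> g \<otimes> x \<in> H}) / of_nat (card H)"
    if g: "g \<in> carrier G" for g
  proof -
    have "(of_nat (perm_char G H g) :: rat) * of_nat (card H) = of_nat (card {x\<in>carrier G. inv x \<otimes> g \<otimes> x \<in> H})"
      using perm_char_card[OF HS g] by (metis of_nat_mult)
    thus ?thesis using cpos by (simp add: field_simps)
  qed
  have "(\<Sum>g\<in>carrier G. uu p (ord g) * of_nat (perm_char G H g))
      = (\<Sum>g\<in>carrier G. uu p (ord g) * of_nat (card {x\<in>carrier G. inv x \<otimes> g \<otimes> x \<in> H})) / of_nat (card H)"
    using e by (simp add: sum_divide_distrib)
  also have "\<dots> = of_nat (card (carrier G)) * (\<Sum>h\<in>H. uu p (ord h)) / of_nat (card H)"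
    using dsum[OF HS, of "\<lambda>h. uu p (ord h)"] ord_conj by simp
  also have "\<dots> = of_nat (card (carrier G)) * of_nat (multiplicity p (card H))"
    using cyc_sum[OF p g0(1)] g0(2) cH cpos by simp
  finally show ?thesis using H_def by simp
qed

lemma main: assumes p: "Factorial_Ring.prime p"
  shows "vp_regconst_trivial G p (artin_relation G) =
     - of_nat (multiplicity p (card (carrier G)))
     + (\<Sum>g\<in>carrier G. of_nat (multiplicity p (ord g))) / of_nat (card (carrier G))
     + of_nat (card {g \<in> carrier G. p dvd ord g})
         / (of_nat (card (carrier G)) * (of_nat p - 1))"
proof -
  define \<alpha> where "\<alpha> = artin_alpha G"
  define SG where "SG = {K. subgroup K G}"
  define w where "w K = (of_int (rat_vp p (1 / of_nat (card K))) :: rat)" for K :: "'a set"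
  have finSG: "finite SG"
  proof -
    have "SG \<subseteq> Pow (carrier G)" unfolding SG_def using subgroup.subset by blast
    thus ?thesis using finG finite_subset by blast
  qed
  have wK: "w K = - of_nat (multiplicity p (card K))" if "K \<in> SG" for K
  proof -
    have "card K > 0" using that finG subgroup.one_closed subgroup.subset unfolding SG_def
      by (metis card_gt_0_iff empty_iff finite_subset mem_Collect_eq)
    thus ?thesis unfolding w_def using rat_vp_inv by simp
  qed
  have GSG: "carrier G \<in> SG" unfolding SG_def using subgroup_self by simp
  have RSG: "cls_rep c \<in> SG" if "c \<in> CL" for c
    using rep_props(1)[OF that] cyc_sub(1) SG_def by simp
  have "vp_regconst_trivial G p (artin_relation G)
      = (\<Sum>K\<in>SG. (if K = carrier G then 1 else 0) * w K)
        - (\<Sum>K\<in>SG. \<Sum>c\<in>CL. (if cls_rep c = K then \<alpha> c else 0) * w K)"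
    unfolding vp_regconst_trivial_def artin_relation_def SG_def[symmetric] w_def[symmetric] \<alpha>_def[symmetric]
    by (simp add: left_diff_distrib sum_subtractf sum_distrib_right)
  also have "(\<Sum>K\<in>SG. (if K = carrier G then 1 else 0) * w K) = w (carrier G)"
  proof -
    have "(\<Sum>K\<in>SG. (if K = carrier G then 1 else 0) * w K) = (\<Sum>K\<in>SG. if K = carrier G then w K else 0)"
      by (intro sum.cong) auto
    also have "\<dots> = w (carrier G)" using finSG GSG by simp
    finally show ?thesis .
  qed
  also have "(\<Sum>K\<in>SG. \<Sum>c\<in>CL. (if cls_rep c = K then \<alpha> c else 0) * w K) = (\<Sum>c\<in>CL. \<alpha> c * w (cls_rep c))"
  proof -
    have "(\<Sum>K\<in>SG. \<Sum>c\<in>CL. (if cls_rep c = K then \<alpha> c else 0) * w K)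
        = (\<Sum>c\<in>CL. \<Sum>K\<in>SG. (if cls_rep c = K then \<alpha> c * w K else 0))"
      by (subst sum.swap) (intro sum.cong refl, simp)
    also have "\<dots> = (\<Sum>c\<in>CL. \<alpha> c * w (cls_rep c))"
      using finSG RSG by (intro sum.cong refl) simp
    finally show ?thesis .
  qed
  finally have V: "vp_regconst_trivial G p (artin_relation G) = w (carrier G) - (\<Sum>c\<in>CL. \<alpha> c * w (cls_rep c))" .
  have gpos: "card (carrier G) > 0" using finG one_closed by (auto simp: card_gt_0_iff)
  have S: "(\<Sum>c\<in>CL. \<alpha> c * w (cls_rep c)) = - (\<Sum>g\<in>carrier G. uu p (ord g)) / of_nat (card (carrier G))"
  proof -
    have "(\<Sum>c\<in>CL. \<alpha> c * w (cls_rep c))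
        = - (\<Sum>c\<in>CL. \<alpha> c * (\<Sum>g\<in>carrier G. uu p (ord g) * of_nat (perm_char G (cls_rep c) g))) / of_nat (card (carrier G))"
    proof -
      have "\<alpha> c * w (cls_rep c) = - (\<alpha> c * (\<Sum>g\<in>carrier G. uu p (ord g) * of_nat (perm_char G (cls_rep c) g))) / of_nat (card (carrier G))"
        if c: "c \<in> CL" for c
        using class_sum[OF p c] wK[OF RSG[OF c]] gpos by simp
      thus ?thesis by (simp add: sum_divide_distrib sum_negf)
    qed
    also have "(\<Sum>c\<in>CL. \<alpha> c * (\<Sum>g\<in>carrier G. uu p (ord g) * of_nat (perm_char G (cls_rep c) g)))
        = (\<Sum>g\<in>carrier G. uu p (ord g) * (\<Sum>c\<in>CL. \<alpha> c * of_nat (perm_char G (cls_rep c) g)))"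
      by (simp add: sum_distrib_left sum_distrib_right mult_ac sum.swap[of _ CL])
    also have "\<dots> = (\<Sum>g\<in>carrier G. uu p (ord g))"
      using artin_alpha_props(2) \<alpha>_def by simp
    finally show ?thesis .
  qed
  have U: "(\<Sum>g\<in>carrier G. uu p (ord g)) = (\<Sum>g\<in>carrier G. of_nat (multiplicity p (ord g)))
      + of_nat (card {g \<in> carrier G. p dvd ord g}) / (of_nat p - 1)"
  proof -
    have "(\<Sum>g\<in>carrier G. (if p dvd ord g then 1 / (of_nat p - 1) else 0 :: rat))
        = (\<Sum>g\<in>{g \<in> carrier G. p dvd ord g}. 1 / (of_nat p - 1))"
      by (rule sum.inter_filter[OF finG, symmetric])
    thus ?thesis unfolding uu_def by (simp add: sum.distrib)
  qed
  have pne: "(of_nat p :: rat) - 1 \<noteq> 0" using prime_gt_1_nat[OF p] by simp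
  have pne2: "(of_nat (card (carrier G)) :: rat) * (of_nat p - 1) \<noteq> 0" using pne gpos by simp
  show ?thesis unfolding V S U wK[OF GSG] using gpos pne pne2 by (simp add: field_simps)
qed

end

theorem lemma5p8:
  fixes G :: "('a, 'b) monoid_scheme" and p :: nat
  assumes "group G" and "finite (carrier G)" and "Factorial_Ring.prime p"
  shows "vp_regconst_trivial G p (artin_relation G) =
     - of_nat (multiplicity p (card (carrier G)))
     + (\<Sum>g\<in>carrier G. of_nat (multiplicity p (group.ord G g))) / of_nat (card (carrier G))
     + of_nat (card {g \<in> carrier G. p dvd group.ord G g})
         / (of_nat (card (carrier G)) * (of_nat p - 1))"
proof -
  interpret fgrp G using assms(1,2) by (simp add: fgrp_def fgrp_axioms_def)
  show ?thesis using main[OF assms(3)] .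
qed

end
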